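(* Let $N\ge 2k$ be integers with $k\in\{1,2,3,4\}$, let $h>0$, $\alpha_1,\alpha_2,\alpha_3\in\mathbb{R}$, and let $\mathcal{D}_1,\mathcal{D}_2,\mathcal{D}_3\in\mathbb{C}^{N^3\times N^3}$ be as defined in the context. Define the block matrices $$\mathcal{CURL}_{\vec{\mathrm{k}}}=\begin{pmatrix}0&-\mathcal{D}_3&\mathcal{D}_2\\ \mathcal{D}_3&0&-\mathcal{D}_1\\ -\mathcal{D}_2&\mathcal{D}_1&0\end{pmatrix},\qquad \mathcal{DIV}_{\vec{\mathrm{k}}}=\begin{pmatrix}\mathcal{D}_1&\mathcal{D}_2&\mathcal{D}_3\end{pmatrix},$$ and $$\vec L_{\vec{\mathrm{k}}}:=\mathcal{CURL}_{\vec{\mathrm{k}}}\mathcal{CURL}_{\vec{\mathrm{k}}}'+\mathcal{DIV}_{\vec{\mathrm{k}}}'\mathcal{DIV}_{\vec{\mathrm{k}}},\qquad L_{\vec{\mathrm{k}}}:=\mathcal{DIV}_{\vec{\mathrm{k}}}\mathcal{DIV}_{\vec{\mathrm{k}}}'.$$ Then $\vec L_{\vec{\mathrm{k}}}=\mathrm{diag}(L_{\vec{\mathrm{k}}},L_{\vec{\mathrm{k}}},L_{\vec{\mathrm{k}}})$ (block diagonal).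
   Context: $X'$ denotes conjugate transpose, $I_N$ the $N\times N$ identity, $\otimes$ the Kronecker product, $\mathrm{i}=\sqrt{-1}$. For $\vec a\in\mathbb{R}^N$, $\mathrm{Circ}(\vec a)$ is the circulant matrix with $\mathrm{Circ}(\vec a)_{ij}=a_{((j-i)\bmod N)+1}$. Let $\mathbb{D}_1=\mathrm{Circ}(\vec v_1)$, $\mathbb{D}_0=\mathrm{Circ}(\vec v_0)$ with $\vec v_1=(-c_1,c_1,c_2,\dots,c_k,0,\dots,0,-c_k,\dots,-c_2)^T$, $\vec v_0=(d_1,d_1,d_2,\dots,d_k,0,\dots,0,d_k,\dots,d_2)^T\in\mathbb{R}^N$, where: $k=1$: $c_1=1$, $d_1=1/2$; $k=2$: $(c_1,c_2)=(9/8,-1/24)$, $(d_1,d_2)=(9/16,-1/16)$; $k=3$: $(c_1,c_2,c_3)=(25/64,-25/384,3/640)$, $(d_1,d_2,d_3)=(75/128,-25/256,3/256)$; $k=4$: $(c_1,\dots,c_4)=(1225/1024,-245/3072,49/5120,-5/7168)$, $(d_1,\dots,d_4)=(1225/2048,-245/2048,49/2048,-5/2048)$. Set $K_1=I_N\otimes I_N\otimes(\mathbb{D}_1/h)$, $K_2=I_N\otimes(\mathbb{D}_1/h)\otimes I_N$, $K_3=(\mathbb{D}_1/h)\otimes I_N\otimes I_N$, $L_1=I_N\otimes I_N\otimes(\alpha_1\mathbb{D}_0)$, $L_2=I_N\otimes(\alpha_2\mathbb{D}_0)\otimes I_N$, $L_3=(\alpha_3\mathbb{D}_0)\otimes I_N\otimes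 I_N$, and $\mathcal{D}_i=K_i+\mathrm{i}L_i$. *)

theory Defs
  imports "Jordan_Normal_Form.Schur_Decomposition"
begin

definition kron :: "'a :: times mat \<Rightarrow> 'a mat \<Rightarrow> 'a mat" where
  "kron A B = mat (dim_row A * dim_row B) (dim_col A * dim_col B)
     (\<lambda>(i,j). A $$ (i div dim_row B, j div dim_col B) * B $$ (i mod dim_row B, j mod dim_col B))"

definition circ :: "nat \<Rightarrow> (nat \<Rightarrow> complex) \<Rightarrow> complex mat" where
  "circ N a = mat N N (\<lambda>(i,j). a ((j + N - i) mod N))"

definition cs :: "nat \<Rightarrow> real list" where
  "cs k = (if k = 1 then [1]
     else if k = 2 then [9/8, -1/24]
     else if k = 3 then [25/64, -25/384, 3/640]
     else [1225/1024, -245/3072, 49/5120, -5/7168])"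

definition ds :: "nat \<Rightarrow> real list" where
  "ds k = (if k = 1 then [1/2]
     else if k = 2 then [9/16, -1/16]
     else if k = 3 then [75/128, -25/256, 3/256]
     else [1225/2048, -245/2048, 49/2048, -5/2048])"

text \<open>The vectors v_1, v_0 (0-indexed, length N):
  v_1 = (-c1, c1, c2, ..., ck, 0, ..., 0, -ck, ..., -c2),
  v_0 = ( d1, d1, d2, ..., dk, 0, ..., 0,  dk, ...,  d2).\<close>
definition stencil_vec :: "nat \<Rightarrow> nat \<Rightarrow> real list \<Rightarrow> real \<Rightarrow> real \<Rightarrow> nat \<Rightarrow> complex" where
  "stencil_vec N k a x0 s j =
     complex_of_real (if j = 0 then x0
      else if j \<le> k then a ! (j - 1)
      else if N - k + 1 \<le> j \<and> j \<le> N - 1 then s * a ! (N - j)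
      else 0)"

definition v1 :: "nat \<Rightarrow> nat \<Rightarrow> nat \<Rightarrow> complex" where
  "v1 N k = stencil_vec N k (cs k) (- (cs k ! 0)) (-1)"

definition v0 :: "nat \<Rightarrow> nat \<Rightarrow> nat \<Rightarrow> complex" where
  "v0 N k = stencil_vec N k (ds k) (ds k ! 0) 1"

definition DD1 :: "nat \<Rightarrow> nat \<Rightarrow> complex mat" where "DD1 N k = circ N (v1 N k)"
definition DD0 :: "nat \<Rightarrow> nat \<Rightarrow> complex mat" where "DD0 N k = circ N (v0 N k)"

definition Dop :: "nat \<Rightarrow> nat \<Rightarrow> real \<Rightarrow> real \<Rightarrow> real \<Rightarrow> real \<Rightarrow> nat \<Rightarrow> complex mat" where
  "Dop N k h a1 a2 a3 i =
    (let I = (1\<^sub>m N :: complex mat);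
         A = (complex_of_real (1 / h)) \<cdot>\<^sub>m DD1 N k;
         B = (\<lambda>a. complex_of_real a \<cdot>\<^sub>m DD0 N k)
     in if i = 1 then kron I (kron I A) + \<i> \<cdot>\<^sub>m kron I (kron I (B a1))
        else if i = 2 then kron I (kron A I) + \<i> \<cdot>\<^sub>m kron I (kron (B a2) I)
        else kron A (kron I I) + \<i> \<cdot>\<^sub>m kron (B a3) (kron I I))"

definition block_mat :: "nat \<Rightarrow> nat \<Rightarrow> nat \<Rightarrow> nat \<Rightarrow> 'a mat list list \<Rightarrow> 'a mat" where
  "block_mat r c n m Bs = mat (r * n) (c * m)
     (\<lambda>(i,j). (Bs ! (i div n) ! (j div m)) $$ (i mod n, j mod m))"

end

theory Submission imports Defs
begin
lemma adj_dim[simp]: "dim_row (mat_adjoint A) = dim_col A" "dim_col (mat_adjoint A) = dim_row A"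
  unfolding mat_adjoint_def by auto
lemma adj_index[simp]: "i < dim_col A \<Longrightarrow> j < dim_row A \<Longrightarrow> mat_adjoint (A::complex mat) $$ (i,j) = cnj (A $$ (j,i))"
  unfolding mat_adjoint_def by (auto simp: mat_of_rows_index)
lemma sum_ivl_shift: "sum f {k..<k+n} = (\<Sum>b<n. f (k+b::nat))"
  by (induct n) auto
lemma sum_split: "(\<Sum>i<m*n. f i) = (\<Sum>a<m. \<Sum>b<n. f (a*n+b::nat))"
proof -
  have "(\<Sum>i<m*n. f i) = (\<Sum>a<m. sum f {a*n..<a*n+n})" by (simp add: sum.nat_group)
  also have "\<dots> = (\<Sum>a<m. \<Sum>b<n. f (a*n+b))"
    by (simp add: sum_ivl_shift)
  finally show ?thesis .
qed
lemma circ_dim[simp]: "dim_row (circ N a) = N" "dim_col (circ N a) = N" "circ N a \<in> carrier_mat N N"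
  unfolding circ_def by auto
lemma circ_index[simp]: "i < N \<Longrightarrow> j < N \<Longrightarrow> circ N a $$ (i,j) = a ((j + N - i) mod N)"
  unfolding circ_def by auto
lemma circ_int: assumes "i < N" shows "(j + N - i) mod N = nat ((int j - int i) mod int N)"
proof -
  have "int ((j + N - i) mod N) = (int j + int N - int i) mod int N"
    using assms by (simp add: of_nat_mod of_nat_diff)
  also have "\<dots> = (int j - int i) mod int N"
    by (metis add.commute add_diff_eq mod_add_self1)
  finally show ?thesis by simp
qed

lemma sum_reflect:
  fixes g :: "int \<Rightarrow> 'a::comm_monoid_add"
  assumes N: "N > 0" and per: "\<And>x. g (x mod int N) = g x"
  shows "(\<Sum>l<N. g (c - int l)) = (\<Sum>l<N. g (int l))"
proof -
  have 1: "nat ((c - int (nat ((c - int a) mod int N))) mod int N) = a" if a: "a < N" for a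
  proof -
    have "(c - (c - int a) mod int N) mod int N = (c - (c - int a)) mod int N"
      by (simp add: mod_diff_right_eq)
    also have "\<dots> = int a" using a by simp
    finally show ?thesis using N by simp
  qed
  have 2: "nat ((c - int a) mod int N) \<in> {..<N}" for a using N
    by (simp add: nat_less_iff)
  have 3: "g (int (nat ((c - int a) mod int N))) = g (c - int a)" for a
    using N per by simp
  show ?thesis
    by (rule sum.reindex_bij_witness[where i="\<lambda>l. nat ((c - int l) mod int N)" and j="\<lambda>l. nat ((c - int l) mod int N)"])
       (use 1 2 3 in auto)
qed

lemma circ_comm: assumes N: "N > 0" shows "circ N a * circ N b = circ N b * circ N a"
proof (rule eq_matI)
  fix i j assume i: "i < dim_row (circ N b * circ N a)" and j: "j < dim_col (circ N b * circ N a)"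
  hence i: "i < N" and j: "j < N" by auto
  define A where "A x = a (nat (x mod int N))" for x
  define B where "B x = b (nat (x mod int N))" for x
  have e: "(circ N p * circ N q) $$ (i,j) = (\<Sum>l<N. p (nat ((int l - int i) mod int N)) * q (nat ((int j - int l) mod int N)))" for p q
    using i j by (simp add: scalar_prod_def atLeast0LessThan circ_int)
  define g where "g x = A (x - int i) * B (int j - x)" for x
  have per: "g (x mod int N) = g x" for x
    unfolding g_def A_def B_def by (simp add: mod_diff_left_eq mod_diff_right_eq)
  have "(\<Sum>l<N. g (int i + int j - int l)) = (\<Sum>l<N. g (int l))"
    by (rule sum_reflect[where g=g and N=N, OF N per])
  thus "(circ N a * circ N b) $$ (i,j) = (circ N b * circ N a) $$ (i,j)"
    unfolding e g_def A_def B_def by (simp add: mult.commute)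
qed auto

lemma circ_adj: assumes N: "N > 0" shows "mat_adjoint (circ N a) = circ N (\<lambda>d. cnj (a ((N - d) mod N)))"
proof (rule eq_matI)
  fix i j assume "i < dim_row (circ N (\<lambda>d. cnj (a ((N - d) mod N))))" "j < dim_col (circ N (\<lambda>d. cnj (a ((N - d) mod N))))"
  hence i: "i < N" and j: "j < N" by auto
  have "(N - (j + N - i) mod N) mod N = (i + N - j) mod N"
  proof -
    have r: "(j + N - i) mod N \<le> N" using N by (simp add: order_less_imp_le)
    have "int ((N - (j + N - i) mod N) mod N) = (int N - int ((j + N - i) mod N)) mod int N"
      using r by (simp add: of_nat_mod of_nat_diff)
    also have "\<dots> = (int N - (int j - int i) mod int N) mod int N"
      using i N by (simp add: circ_int)
    also have "\<dots> = (int N - (int j - int i)) mod int N"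
      by (rule mod_diff_right_eq)
    also have "\<dots> = (int i - int j + int N) mod int N"
      by (simp add: algebra_simps)
    also have "\<dots> = (int i - int j) mod int N"
      by (rule mod_add_self2)
    also have "\<dots> = int ((i + N - j) mod N)"
      using j by (simp add: circ_int)
    finally show ?thesis by simp
  qed
  then show "mat_adjoint (circ N a) $$ (i, j) = circ N (\<lambda>d. cnj (a ((N - d) mod N))) $$ (i, j)"
    using i j by simp
qed auto

lemma circ_add: "circ N a + circ N b = circ N (\<lambda>d. a d + b d)"
  by (rule eq_matI) auto
lemma circ_smult: "c \<cdot>\<^sub>m circ N a = circ N (\<lambda>d. c * a d)"
  by (rule eq_matI) auto
lemma circ_one: assumes "N > 0" shows "1\<^sub>m N = circ N (\<lambda>d. if d = 0 then 1 else 0)"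
proof (rule eq_matI)
  fix i j assume "i < dim_row (circ N (\<lambda>d. if d = 0 then 1 else 0))" "j < dim_col (circ N (\<lambda>d. if d = 0 then 1 else 0))"
  hence i: "i < N" and j: "j < N" by auto
  have "((j + N - i) mod N = 0) = (i = j)"
  proof (cases "i \<le> j")
    case True
    hence e: "j + N - i = (j - i) + N" by simp
    have "j - i < N" using j by linarith
    hence "(j + N - i) mod N = j - i" unfolding e mod_add_self2 by (rule mod_less)
    then show ?thesis using True j by auto
  next
    case False
    hence "j + N - i < N" using i by linarith
    hence "(j + N - i) mod N = j + N - i" by (rule mod_less)
    then show ?thesis using False i by simp
  qed
  then show "1\<^sub>m N $$ (i, j) = circ N (\<lambda>d. if d = 0 then 1 else 0) $$ (i, j)"
    using i j by (simp only: index_one_mat circ_index)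
qed auto

lemma kron_dim[simp]: "dim_row (kron A B) = dim_row A * dim_row B" "dim_col (kron A B) = dim_col A * dim_col B"
  unfolding kron_def by auto
lemma kron_index: "i < dim_row A * dim_row B \<Longrightarrow> j < dim_col A * dim_col B \<Longrightarrow>
   kron A B $$ (i,j) = A $$ (i div dim_row B, j div dim_col B) * B $$ (i mod dim_row B, j mod dim_col B)"
  unfolding kron_def by auto

lemma div_bound: "i < a * (b::nat) \<Longrightarrow> i div b < a"
  by (simp add: less_mult_imp_div_less)
lemma mod_bound: "i < a * (b::nat) \<Longrightarrow> i mod b < b"
  by (metis mod_less_divisor mult_0_right not_less_zero gr0I)

lemma kron_carrier: "A \<in> carrier_mat a b \<Longrightarrow> B \<in> carrier_mat c d \<Longrightarrow> kron A B \<in> carrier_mat (a*c) (b*d)"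
  unfolding carrier_mat_def by simp

lemma kron_mult:
  fixes A B C D :: "'a::comm_ring_1 mat"
  assumes ac: "dim_col A = dim_row C" and bd: "dim_col B = dim_row D"
    and pos: "dim_col B > 0"
  shows "kron A B * kron C D = kron (A * C) (B * D)"
proof (rule eq_matI)
  fix i j assume "i < dim_row (kron (A * C) (B * D))" "j < dim_col (kron (A * C) (B * D))"
  hence i: "i < dim_row A * dim_row B" and j: "j < dim_col C * dim_col D" by auto
  let ?n = "dim_col B"
  have "(kron A B * kron C D) $$ (i,j) = (\<Sum>k<dim_col A * ?n. kron A B $$ (i,k) * kron C D $$ (k,j))"
    using i j ac bd by (auto simp: scalar_prod_def atLeast0LessThan intro!: sum.cong)
  also have "\<dots> = (\<Sum>a<dim_col A. \<Sum>b<?n. kron A B $$ (i,a*?n+b) * kron C D $$ (a*?n+b,j))"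
    by (rule sum_split)
  also have "\<dots> = (\<Sum>a<dim_col A. \<Sum>b<?n. (A $$ (i div dim_row B, a) * C $$ (a, j div dim_col D)) *
                         (B $$ (i mod dim_row B, b) * D $$ (b, j mod dim_col D)))"
  proof (intro sum.cong refl)
    fix a b assume a: "a \<in> {..<dim_col A}" and b: "b \<in> {..<?n}"
    have k: "a * ?n + b < dim_col A * ?n"
      using a b by (simp add: less_imp_le_nat mult_le_mono1 order_less_le_trans[OF _ mult_le_mono1[of "Suc a"]])
    have "a * ?n + b < dim_row C * dim_row D" using k ac bd by simp
    then show "kron A B $$ (i,a*?n+b) * kron C D $$ (a*?n+b,j) = (A $$ (i div dim_row B, a) * C $$ (a, j div dim_col D)) *
                         (B $$ (i mod dim_row B, b) * D $$ (b, j mod dim_col D))"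
      using i j k b pos bd by (simp add: kron_index ac_simps)
  qed
  also have "\<dots> = (\<Sum>a<dim_col A. A $$ (i div dim_row B, a) * C $$ (a, j div dim_col D)) *
                   (\<Sum>b<?n. B $$ (i mod dim_row B, b) * D $$ (b, j mod dim_col D))"
    by (simp add: sum_product)
  also have "\<dots> = kron (A * C) (B * D) $$ (i,j)"
    using i j ac bd div_bound[OF i] mod_bound[OF i] div_bound[OF j] mod_bound[OF j]
    by (simp add: kron_index scalar_prod_def atLeast0LessThan)
  finally show "(kron A B * kron C D) $$ (i,j) = kron (A * C) (B * D) $$ (i,j)" .
qed auto

lemma kron_adj:
  fixes A B :: "complex mat"
  shows "mat_adjoint (kron A B) = kron (mat_adjoint A) (mat_adjoint B)"
proof (rule eq_matI)
  fix i j assume "i < dim_row (kron (mat_adjoint A) (mat_adjoint B))" "j < dim_col (kron (mat_adjoint A) (mat_adjoint B))"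
  hence i: "i < dim_col A * dim_col B" and j: "j < dim_row A * dim_row B" by auto
  show "mat_adjoint (kron A B) $$ (i,j) = kron (mat_adjoint A) (mat_adjoint B) $$ (i,j)"
    using i j div_bound[OF i] mod_bound[OF i] div_bound[OF j] mod_bound[OF j]
    by (simp add: kron_index)
qed auto

lemma kron_add_right: fixes A B C :: "'a::comm_ring_1 mat" shows "B \<in> carrier_mat n m \<Longrightarrow> C \<in> carrier_mat n m \<Longrightarrow> (kron A B + kron A C = kron A (B + C))"
  by (rule eq_matI) (auto simp: kron_index div_bound mod_bound distrib_left)
lemma kron_add_left: fixes A B C :: "'a::comm_ring_1 mat" shows "B \<in> carrier_mat n m \<Longrightarrow> C \<in> carrier_mat n m \<Longrightarrow> (kron B A + kron C A = kron (B + C) A)"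
  by (rule eq_matI) (auto simp: kron_index div_bound mod_bound distrib_right)
lemma kron_smult_right: fixes A B C :: "'a::comm_ring_1 mat" shows "c \<cdot>\<^sub>m kron A B = kron A (c \<cdot>\<^sub>m B)"
  by (rule eq_matI) (auto simp: kron_index div_bound mod_bound ac_simps)
lemma kron_smult_left: fixes A B C :: "'a::comm_ring_1 mat" shows "c \<cdot>\<^sub>m kron A B = kron (c \<cdot>\<^sub>m A) B"
  by (rule eq_matI) (auto simp: kron_index div_bound mod_bound ac_simps)

lemma block_dim[simp]: "dim_row (block_mat r c n m Bs) = r * n" "dim_col (block_mat r c n m Bs) = c * m"
  unfolding block_mat_def by auto
lemma block_index: "i < r * n \<Longrightarrow> j < c * m \<Longrightarrow>
  block_mat r c n m Bs $$ (i,j) = (Bs ! (i div n) ! (j div m)) $$ (i mod n, j mod m)"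
  unfolding block_mat_def by auto

lemma split_bound: "a < c \<Longrightarrow> b < (n::nat) \<Longrightarrow> a * n + b < c * n"
proof -
  assume a: "a < c" and b: "b < n"
  have "a * n + b < Suc a * n" using b by simp
  also have "Suc a * n \<le> c * n" using a by (intro mult_le_mono1) simp
  finally show ?thesis .
qed

lemma divmod_split: "l < (n::nat) \<Longrightarrow> (q*n+l) div n = q" "l < (n::nat) \<Longrightarrow> (q*n+l) mod n = l"
  by auto
lemma mult_adj_gen: fixes X Y :: "complex mat"
  assumes "dim_col X = dim_col Y" "i < dim_row X" "j < dim_row Y"
  shows "(X * mat_adjoint Y) $$ (i,j) = (\<Sum>l<dim_col X. X$$(i,l) * cnj (Y$$(j,l)))"
proof -
  have "(X * mat_adjoint Y) $$ (i,j) = row X i \<bullet> col (mat_adjoint Y) j" using assms by simp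
  also have "\<dots> = (\<Sum>l<dim_col X. X$$(i,l) * cnj (Y$$(j,l)))"
    unfolding scalar_prod_def using assms by (simp add: atLeast0LessThan)
  finally show ?thesis .
qed
lemma adj_mult_gen: fixes X Y :: "complex mat"
  assumes "dim_row X = dim_row Y" "i < dim_col X" "j < dim_col Y"
  shows "(mat_adjoint X * Y) $$ (i,j) = (\<Sum>l<dim_row X. cnj (X$$(l,i)) * Y$$(l,j))"
proof -
  have "(mat_adjoint X * Y) $$ (i,j) = row (mat_adjoint X) i \<bullet> col Y j" using assms by simp
  also have "\<dots> = (\<Sum>l<dim_row X. cnj (X$$(l,i)) * Y$$(l,j))"
    unfolding scalar_prod_def using assms by (simp add: atLeast0LessThan)
  finally show ?thesis .
qed
lemma mult_adj_index: fixes X Y :: "complex mat"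
  assumes "X \<in> carrier_mat n n" "Y \<in> carrier_mat n n" "i < n" "j < n"
  shows "(X * mat_adjoint Y) $$ (i,j) = (\<Sum>l<n. X$$(i,l) * cnj (Y$$(j,l)))"
proof -
  have d: "dim_row X = n" "dim_col X = n" "dim_row Y = n" "dim_col Y = n" using assms(1,2) by auto
  show ?thesis using mult_adj_gen[of X Y i j] d assms(3,4) by simp
qed
lemma adj_mult_index: fixes X Y :: "complex mat"
  assumes "X \<in> carrier_mat n n" "Y \<in> carrier_mat n n" "i < n" "j < n"
  shows "(mat_adjoint X * Y) $$ (i,j) = (\<Sum>l<n. cnj (X$$(l,i)) * Y$$(l,j))"
proof -
  have d: "dim_row X = n" "dim_col X = n" "dim_row Y = n" "dim_col Y = n" using assms(1,2) by auto
  show ?thesis using adj_mult_gen[of X Y i j] d assms(3,4) by simp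
qed

lemma block_mult_adj:
  fixes Bs Cs :: "complex mat list list"
  assumes B: "\<And>a q. a < r \<Longrightarrow> q < c \<Longrightarrow> Bs!a!q \<in> carrier_mat n n"
    and C: "\<And>b q. b < s \<Longrightarrow> q < c \<Longrightarrow> Cs!b!q \<in> carrier_mat n n"
    and i: "i < r * n" and j: "j < s * n"
  shows "(block_mat r c n n Bs * mat_adjoint (block_mat s c n n Cs)) $$ (i,j)
    = (\<Sum>q<c. (Bs!(i div n)!q * mat_adjoint (Cs!(j div n)!q)) $$ (i mod n, j mod n))"
proof -
  have a: "i div n < r" "i mod n < n" using div_bound[OF i] mod_bound[OF i] by auto
  have b: "j div n < s" "j mod n < n" using div_bound[OF j] mod_bound[OF j] by auto
  have "(block_mat r c n n Bs * mat_adjoint (block_mat s c n n Cs)) $$ (i,j)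
     = (\<Sum>k<c*n. block_mat r c n n Bs $$ (i,k) * cnj (block_mat s c n n Cs $$ (j,k)))"
    using i j by (subst mult_adj_gen) simp_all
  also have "\<dots> = (\<Sum>q<c. \<Sum>l<n. block_mat r c n n Bs $$ (i,q*n+l) * cnj (block_mat s c n n Cs $$ (j,q*n+l)))"
    by (rule sum_split)
  also have "\<dots> = (\<Sum>q<c. (Bs!(i div n)!q * mat_adjoint (Cs!(j div n)!q)) $$ (i mod n, j mod n))"
  proof (intro sum.cong refl)
    fix q assume q: "q \<in> {..<c}"
    have cb: "Bs!(i div n)!q \<in> carrier_mat n n" "Cs!(j div n)!q \<in> carrier_mat n n"
      using B C a b q by auto
    show "(\<Sum>l<n. block_mat r c n n Bs $$ (i,q*n+l) * cnj (block_mat s c n n Cs $$ (j,q*n+l)))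
      = (Bs!(i div n)!q * mat_adjoint (Cs!(j div n)!q)) $$ (i mod n, j mod n)"
      unfolding mult_adj_index[OF cb a(2) b(2)]
    proof (intro sum.cong refl)
      fix l assume l: "l \<in> {..<n}"
      have k: "q*n+l < c*n" using q l split_bound by auto
      show "block_mat r c n n Bs $$ (i,q*n+l) * cnj (block_mat s c n n Cs $$ (j,q*n+l)) =
         Bs ! (i div n) ! q $$ (i mod n, l) * cnj (Cs ! (j div n) ! q $$ (j mod n, l))"
        using l k i j by (simp only: block_index divmod_split lessThan_iff)
    qed
  qed
  finally show ?thesis .
qed

lemma adj_block_mult:
  fixes Bs Cs :: "complex mat list list"
  assumes B: "\<And>q a. q < r \<Longrightarrow> a < s \<Longrightarrow> Bs!q!a \<in> carrier_mat n n"
    and C: "\<And>q b. q < r \<Longrightarrow> b < t \<Longrightarrow> Cs!q!b \<in> carrier_mat n n"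
    and i: "i < s * n" and j: "j < t * n"
  shows "(mat_adjoint (block_mat r s n n Bs) * block_mat r t n n Cs) $$ (i,j)
    = (\<Sum>q<r. (mat_adjoint (Bs!q!(i div n)) * Cs!q!(j div n)) $$ (i mod n, j mod n))"
proof -
  have a: "i div n < s" "i mod n < n" using div_bound[OF i] mod_bound[OF i] by auto
  have b: "j div n < t" "j mod n < n" using div_bound[OF j] mod_bound[OF j] by auto
  have "(mat_adjoint (block_mat r s n n Bs) * block_mat r t n n Cs) $$ (i,j)
     = (\<Sum>k<r*n. cnj (block_mat r s n n Bs $$ (k,i)) * block_mat r t n n Cs $$ (k,j))"
    using i j by (subst adj_mult_gen) simp_all
  also have "\<dots> = (\<Sum>q<r. \<Sum>l<n. cnj (block_mat r s n n Bs $$ (q*n+l,i)) * block_mat r t n n Cs $$ (q*n+l,j))"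
    by (rule sum_split)
  also have "\<dots> = (\<Sum>q<r. (mat_adjoint (Bs!q!(i div n)) * Cs!q!(j div n)) $$ (i mod n, j mod n))"
  proof (intro sum.cong refl)
    fix q assume q: "q \<in> {..<r}"
    have cb: "Bs!q!(i div n) \<in> carrier_mat n n" "Cs!q!(j div n) \<in> carrier_mat n n"
      using B C a b q by auto
    show "(\<Sum>l<n. cnj (block_mat r s n n Bs $$ (q*n+l,i)) * block_mat r t n n Cs $$ (q*n+l,j))
      = (mat_adjoint (Bs!q!(i div n)) * Cs!q!(j div n)) $$ (i mod n, j mod n)"
      unfolding adj_mult_index[OF cb a(2) b(2)]
    proof (intro sum.cong refl)
      fix l assume l: "l \<in> {..<n}"
      have k: "q*n+l < r*n" using q l split_bound by auto
      show "cnj (block_mat r s n n Bs $$ (q*n+l,i)) * block_mat r t n n Cs $$ (q*n+l,j) =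
         cnj (Bs ! q ! (i div n) $$ (l, i mod n)) * Cs ! q ! (j div n) $$ (l, j mod n)"
        using l k i j by (simp only: block_index divmod_split lessThan_iff)
    qed
  qed
  finally show ?thesis .
qed

lemma uminus_uminus_mat[simp]: "- (- (A :: 'a :: group_add mat)) = A"
  by (rule eq_matI) auto
lemma adj_zero[simp]: "mat_adjoint (0\<^sub>m n m :: complex mat) = 0\<^sub>m m n"
  by (rule eq_matI) auto
lemma adj_uminus[simp]: "mat_adjoint (- A :: complex mat) = - mat_adjoint A"
  by (rule eq_matI) auto

lemma circ_adj_comm: assumes N: "N > 0" shows "mat_adjoint (circ N a) * circ N b = circ N b * mat_adjoint (circ N a)"
  unfolding circ_adj[OF N] by (rule circ_comm[OF N])

lemma kron3_comm:
  assumes N: "N > 0"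
  shows "mat_adjoint (kron (circ N a1) (kron (circ N b1) (circ N c1))) * kron (circ N a2) (kron (circ N b2) (circ N c2))
       = kron (circ N a2) (kron (circ N b2) (circ N c2)) * mat_adjoint (kron (circ N a1) (kron (circ N b1) (circ N c1)))"
proof -
  let ?A1 = "mat_adjoint (circ N a1)" and ?B1 = "mat_adjoint (circ N b1)" and ?C1 = "mat_adjoint (circ N c1)"
  have d: "?A1 \<in> carrier_mat N N" "?B1 \<in> carrier_mat N N" "?C1 \<in> carrier_mat N N" by auto
  have NN: "N * N > 0" using N by simp
  have "mat_adjoint (kron (circ N a1) (kron (circ N b1) (circ N c1))) * kron (circ N a2) (kron (circ N b2) (circ N c2))
      = kron ?A1 (kron ?B1 ?C1) * kron (circ N a2) (kron (circ N b2) (circ N c2))"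
    by (simp add: kron_adj)
  also have "\<dots> = kron (?A1 * circ N a2) (kron ?B1 ?C1 * kron (circ N b2) (circ N c2))"
    by (rule kron_mult) (use N in simp_all)
  also have "kron ?B1 ?C1 * kron (circ N b2) (circ N c2) = kron (?B1 * circ N b2) (?C1 * circ N c2)"
    by (rule kron_mult) (use N in simp_all)
  also have "kron (?A1 * circ N a2) (kron (?B1 * circ N b2) (?C1 * circ N c2))
     = kron (circ N a2 * ?A1) (kron (circ N b2 * ?B1) (circ N c2 * ?C1))"
    by (simp add: circ_adj_comm[OF N])
  also have "kron (circ N b2 * ?B1) (circ N c2 * ?C1) = kron (circ N b2) (circ N c2) * kron ?B1 ?C1"
    by (rule kron_mult[symmetric]) (use N in simp_all)
  also have "kron (circ N a2 * ?A1) (kron (circ N b2) (circ N c2) * kron ?B1 ?C1)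
     = kron (circ N a2) (kron (circ N b2) (circ N c2)) * kron ?A1 (kron ?B1 ?C1)"
    by (rule kron_mult[symmetric]) (use N in simp_all)
  also have "\<dots> = kron (circ N a2) (kron (circ N b2) (circ N c2)) * mat_adjoint (kron (circ N a1) (kron (circ N b1) (circ N c1)))"
    by (simp add: kron_adj)
  finally show ?thesis .
qed

lemma D_form:
  assumes N: "N > 0" and i: "i \<in> {1,2,3::nat}"
  shows "\<exists>a b c. Dop N k h a1 a2 a3 i = kron (circ N a) (kron (circ N b) (circ N c))"
proof -
  define I :: "complex mat" where "I = 1\<^sub>m N"
  define A where "A = complex_of_real (1 / h) \<cdot>\<^sub>m DD1 N k"
  define B where "B = (\<lambda>a. complex_of_real a \<cdot>\<^sub>m DD0 N k)"
  obtain e where e: "I = circ N e" unfolding I_def using circ_one[OF N] by blast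
  have Z: "\<exists>z. A + \<i> \<cdot>\<^sub>m B a = circ N z" for a
    unfolding A_def B_def DD1_def DD0_def by (simp only: circ_smult circ_add) blast
  have c: "I \<in> carrier_mat N N" "A \<in> carrier_mat N N" "B a \<in> carrier_mat N N" for a
    unfolding I_def A_def B_def DD1_def DD0_def by auto
  have D1: "Dop N k h a1 a2 a3 1 = kron I (kron I (A + \<i> \<cdot>\<^sub>m B a1))"
  proof -
    have "Dop N k h a1 a2 a3 1 = kron I (kron I A) + \<i> \<cdot>\<^sub>m kron I (kron I (B a1))"
      unfolding Dop_def Let_def I_def A_def B_def by simp
    also have "\<dots> = kron I (kron I A) + kron I (kron I (\<i> \<cdot>\<^sub>m B a1))"
      by (simp add: kron_smult_right)
    also have "\<dots> = kron I (kron I A + kron I (\<i> \<cdot>\<^sub>m B a1))"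
      by (rule kron_add_right[where n="N*N" and m="N*N"]) (use c in \<open>simp_all add: kron_carrier\<close>)
    also have "kron I A + kron I (\<i> \<cdot>\<^sub>m B a1) = kron I (A + \<i> \<cdot>\<^sub>m B a1)"
      by (rule kron_add_right[where n=N and m=N]) (use c in \<open>simp_all add: kron_carrier\<close>)
    finally show ?thesis .
  qed
  have D2: "Dop N k h a1 a2 a3 2 = kron I (kron (A + \<i> \<cdot>\<^sub>m B a2) I)"
  proof -
    have "Dop N k h a1 a2 a3 2 = kron I (kron A I) + \<i> \<cdot>\<^sub>m kron I (kron (B a2) I)"
      unfolding Dop_def Let_def I_def A_def B_def by simp
    also have "\<dots> = kron I (kron A I) + kron I (kron (\<i> \<cdot>\<^sub>m B a2) I)"
      by (subst kron_smult_right, subst kron_smult_left, rule refl)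
    also have "\<dots> = kron I (kron A I + kron (\<i> \<cdot>\<^sub>m B a2) I)"
      by (rule kron_add_right[where n="N*N" and m="N*N"]) (use c in \<open>simp_all add: kron_carrier\<close>)
    also have "kron A I + kron (\<i> \<cdot>\<^sub>m B a2) I = kron (A + \<i> \<cdot>\<^sub>m B a2) I"
      by (rule kron_add_left[where n=N and m=N]) (use c in \<open>simp_all add: kron_carrier\<close>)
    finally show ?thesis .
  qed
  have D3: "Dop N k h a1 a2 a3 3 = kron (A + \<i> \<cdot>\<^sub>m B a3) (kron I I)"
  proof -
    have "Dop N k h a1 a2 a3 3 = kron A (kron I I) + \<i> \<cdot>\<^sub>m kron (B a3) (kron I I)"
      unfolding Dop_def Let_def I_def A_def B_def by simp
    also have "\<dots> = kron A (kron I I) + kron (\<i> \<cdot>\<^sub>m B a3) (kron I I)"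
      by (simp add: kron_smult_left)
    also have "\<dots> = kron (A + \<i> \<cdot>\<^sub>m B a3) (kron I I)"
      by (rule kron_add_left[where n=N and m=N]) (use c in \<open>simp_all add: kron_carrier\<close>)
    finally show ?thesis .
  qed
  obtain z1 where z1: "A + \<i> \<cdot>\<^sub>m B a1 = circ N z1" using Z by blast
  obtain z2 where z2: "A + \<i> \<cdot>\<^sub>m B a2 = circ N z2" using Z by blast
  obtain z3 where z3: "A + \<i> \<cdot>\<^sub>m B a3 = circ N z3" using Z by blast
  from i consider "i = 1" | "i = 2" | "i = 3" by blast
  then show ?thesis
  proof cases
    case 1 show ?thesis unfolding 1 D1 z1 e by blast
  next
    case 2 show ?thesis unfolding 2 D2 z2 e by blast
  next
    case 3 show ?thesis unfolding 3 D3 z3 e by blast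
  qed
qed

lemma D_carrier:
  assumes N: "N > 0" and i: "i \<in> {1,2,3::nat}"
  shows "Dop N k h a1 a2 a3 i \<in> carrier_mat (N^3) (N^3)"
proof -
  obtain a b c where e: "Dop N k h a1 a2 a3 i = kron (circ N a) (kron (circ N b) (circ N c))"
    using D_form[OF N i, of k h a1 a2 a3] by blast
  show ?thesis unfolding e carrier_mat_def by (simp add: power3_eq_cube)
qed

lemma D_comm:
  assumes N: "N > 0" and i: "i \<in> {1,2,3::nat}" and j: "j \<in> {1,2,3::nat}"
  shows "mat_adjoint (Dop N k h a1 a2 a3 i) * Dop N k h a1 a2 a3 j = Dop N k h a1 a2 a3 j * mat_adjoint (Dop N k h a1 a2 a3 i)"
proof -
  obtain a b c where e: "Dop N k h a1 a2 a3 i = kron (circ N a) (kron (circ N b) (circ N c))"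
    using D_form[OF N i, of k h a1 a2 a3] by blast
  obtain a' b' c' where e': "Dop N k h a1 a2 a3 j = kron (circ N a') (kron (circ N b') (circ N c'))"
    using D_form[OF N j, of k h a1 a2 a3] by blast
  show ?thesis unfolding e e' by (rule kron3_comm[OF N])
qed

lemma sum3: "(\<Sum>q<3::nat. f q) = f 0 + f 1 + (f 2 :: 'a :: comm_monoid_add)"
  by (simp add: numeral_3_eq_3 numeral_2_eq_2 add_ac)
lemma sum1: "(\<Sum>q<1::nat. f q) = (f 0 :: 'a :: comm_monoid_add)"
  by simp

theorem corollary4p8:
  fixes N k :: nat and h a1 a2 a3 :: real
  assumes "k \<in> {1, 2, 3, 4}" and "N \<ge> 2 * k" and "h > 0"
  defines "M \<equiv> N ^ 3"
  defines "D \<equiv> Dop N k h a1 a2 a3"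
  defines "CURL \<equiv> block_mat 3 3 M M
             [[0\<^sub>m M M, - D 3, D 2],
              [D 3, 0\<^sub>m M M, - D 1],
              [- D 2, D 1, 0\<^sub>m M M]]"
  defines "DIV \<equiv> block_mat 1 3 M M [[D 1, D 2, D 3]]"
  defines "L \<equiv> DIV * mat_adjoint DIV"
  shows "CURL * mat_adjoint CURL + mat_adjoint DIV * DIV
         = block_mat 3 3 M M [[L, 0\<^sub>m M M, 0\<^sub>m M M], [0\<^sub>m M M, L, 0\<^sub>m M M], [0\<^sub>m M M, 0\<^sub>m M M, L]]"
proof -
  have N: "N > 0" using assms(1,2) by auto
  have Dc: "D i \<in> carrier_mat M M" if "i \<in> {1,2,3}" for i
    using D_carrier[OF N that] unfolding D_def M_def .
  have cm: "mat_adjoint (D i) * D j = D j * mat_adjoint (D i)" if "i \<in> {1,2,3}" "j \<in> {1,2,3}" for i j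
    unfolding D_def by (rule D_comm[OF N that])
  have c1: "D 1 \<in> carrier_mat M M" and c2: "D 2 \<in> carrier_mat M M" and c3: "D 3 \<in> carrier_mat M M"
    using Dc by auto
  have dims: "dim_row (D 1) = M" "dim_col (D 1) = M" "dim_row (D 2) = M" "dim_col (D 2) = M"
     "dim_row (D 3) = M" "dim_col (D 3) = M" "dim_row (D (Suc 0)) = M" "dim_col (D (Suc 0)) = M"
     using c1 c2 c3 by auto
  define Cb where "Cb = [[0\<^sub>m M M, - D 3, D 2], [D 3, 0\<^sub>m M M, - D 1], [- D 2, D 1, 0\<^sub>m M M]]"
  define Db where "Db = [[D 1, D 2, D 3]]"
  define Rb where "Rb = [[L, 0\<^sub>m M M, 0\<^sub>m M M], [0\<^sub>m M M, L, 0\<^sub>m M M], [0\<^sub>m M M, 0\<^sub>m M M, L]]"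
  have three: "a < 3 \<longleftrightarrow> a = 0 \<or> a = 1 \<or> a = (2::nat)" for a by auto
  have CbC: "Cb!a!q \<in> carrier_mat M M" if "a < 3" "q < 3" for a q
    using that c1 c2 c3 unfolding three Cb_def by auto
  have DbC: "Db!q!a \<in> carrier_mat M M" if "q < 1" "a < 3" for a q
    using that c1 c2 c3 unfolding three Db_def by auto
  have Lidx: "L $$ (x,y) = (D 1 * mat_adjoint (D 1)) $$ (x,y) + (D 2 * mat_adjoint (D 2)) $$ (x,y) + (D 3 * mat_adjoint (D 3)) $$ (x,y)"
    if x: "x < M" and y: "y < M" for x y
  proof -
    have x1: "x < 1 * M" and y1: "y < 1 * M" using x y by auto
    have "L $$ (x,y) = (\<Sum>q<3. (Db!(x div M)!q * mat_adjoint (Db!(y div M)!q)) $$ (x mod M, y mod M))"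
      unfolding L_def DIV_def Db_def[symmetric]
      by (rule block_mult_adj[OF _ _ x1 y1]) (use DbC in auto)
    also have "\<dots> = (\<Sum>q<3. (Db!0!q * mat_adjoint (Db!0!q)) $$ (x, y))"
      using x y by simp
    also have "\<dots> = (D 1 * mat_adjoint (D 1)) $$ (x,y) + (D 2 * mat_adjoint (D 2)) $$ (x,y) + (D 3 * mat_adjoint (D 3)) $$ (x,y)"
      by (simp add: numeral_3_eq_3 Db_def)
    finally show ?thesis .
  qed
  show ?thesis unfolding Rb_def[symmetric]
  proof (rule eq_matI)
    fix i j
    assume "i < dim_row (block_mat 3 3 M M Rb)" "j < dim_col (block_mat 3 3 M M Rb)"
    hence i: "i < 3 * M" and j: "j < 3 * M" by auto
    define x where "x = i mod M"
    define y where "y = j mod M"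
    have x: "x < M" and y: "y < M" unfolding x_def y_def using mod_bound[OF i] mod_bound[OF j] .
    have a: "i div M < 3" and b: "j div M < 3" using div_bound[OF i] div_bound[OF j] .
    have "(CURL * mat_adjoint CURL + mat_adjoint DIV * DIV) $$ (i,j)
       = (CURL * mat_adjoint CURL) $$ (i,j) + (mat_adjoint DIV * DIV) $$ (i,j)"
      using i j unfolding CURL_def DIV_def by simp
    also have "\<dots> = (\<Sum>q<3. (Cb!(i div M)!q * mat_adjoint (Cb!(j div M)!q)) $$ (x, y))
                    + (\<Sum>q<1. (mat_adjoint (Db!q!(i div M)) * Db!q!(j div M)) $$ (x, y))"
      unfolding CURL_def DIV_def Cb_def[symmetric] Db_def[symmetric] x_def y_def
      using block_mult_adj[of 3 3 Cb M 3 Cb i j, OF CbC CbC i j] adj_block_mult[of 1 3 Db M 3 Db i j, OF DbC DbC i j]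
      by simp
    also have "\<dots> = Rb ! (i div M) ! (j div M) $$ (x, y)"
    proof -
      have e: "(\<Sum>q<3. (Cb!a!q * mat_adjoint (Cb!b!q)) $$ (x, y))
                    + (\<Sum>q<1. (mat_adjoint (Db!q!a) * Db!q!b) $$ (x, y)) = Rb ! a ! b $$ (x, y)"
        if "a < 3" "b < 3" for a b
      proof -
        note simps = Cb_def Db_def Rb_def sum3 sum1 x y dims adj_dim Lidx[OF x y]
          cm[of 1 1] cm[of 1 2] cm[of 1 3] cm[of 2 1] cm[of 2 2] cm[of 2 3] cm[of 3 1] cm[of 3 2] cm[of 3 3] cm[of "Suc 0" "Suc 0"] cm[of "Suc 0" 2] cm[of "Suc 0" 3] cm[of 2 "Suc 0"] cm[of 3 "Suc 0"]
        from that consider "a = 0" "b = 0" | "a = 0" "b = 1" | "a = 0" "b = 2"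
          | "a = 1" "b = 0" | "a = 1" "b = 1" | "a = 1" "b = 2"
          | "a = 2" "b = 0" | "a = 2" "b = 1" | "a = 2" "b = 2" unfolding three by blast
        then show ?thesis
        proof cases
          case 1 then show ?thesis by (simp add: simps)
        next
          case 2 then show ?thesis by (simp add: simps)
        next
          case 3 then show ?thesis by (simp add: simps)
        next
          case 4 then show ?thesis by (simp add: simps)
        next
          case 5 then show ?thesis by (simp add: simps)
        next
          case 6 then show ?thesis by (simp add: simps)
        next
          case 7 then show ?thesis by (simp add: simps)
        next
          case 8 then show ?thesis by (simp add: simps)
        next
          case 9 then show ?thesis by (simp add: simps)
        qed
      qed
      show ?thesis by (rule e[OF a b])
    qed
    also have "\<dots> = block_mat 3 3 M M Rb $$ (i,j)"
      unfolding x_def y_def using i j by (simp add: block_index)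
    finally show "(CURL * mat_adjoint CURL + mat_adjoint DIV * DIV) $$ (i,j) = block_mat 3 3 M M Rb $$ (i,j)" .
  qed (auto simp: CURL_def DIV_def Rb_def)
qed
end
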